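(* For $i=1,\dots,d$ let $\omega_i\subseteq\mathbb{R}$ be a nonempty open interval and $f_i:\omega_i\to\mathbb{R}$ a univariate function of Legendre type; let $\Omega=\prod_{i=1}^d\omega_i$ and $F(x)=\sum_{i=1}^d f_i(x_i)$ on $\Omega$, with Bregman divergence $D_F$. Let $P=\{x\in\mathbb{R}^d: x_j=c\}$ be an axis-aligned hyperplane (for some $j\in\{1,\dots,d\}$, $c\in\mathbb{R}$) with $P\cap\Omega\neq\emptyset$, and let $q\in\Omega$. Then the orthogonal projection $q_P=(q_1,\dots,q_{j-1},c,q_{j+1},\dots,q_d)$ of $q$ onto $P$ lies in $P\cap\Omega$ and is the unique minimizer over $p\in P\cap\Omega$ of $D_F(q\|p)$, and also the unique minimizer over $p\in P\cap\Omega$ of $D_F(p\|q)$; i.e. the Bregman projection of $q$ onto $P$, computed in either direction, coincides with the orthogonal projection.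
   Context: A function $G:U\to\mathbb{R}$ on a nonempty open convex set $U$ is of Legendre type if it is differentiable, strictly convex, and, if $\partial U\neq\emptyset$, $\|\nabla G(x)\|\to\infty$ as $x\to\partial U$. The Bregman divergence generated by $G$ is $D_G(x\|y)=G(x)-G(y)-\langle\nabla G(y),x-y\rangle$. For $F=\sum_i f_i(x_i)$ one has $D_F(x\|y)=\sum_i D_{f_i}(x_i\|y_i)$. *)

theory Defs
  imports "HOL-Analysis.Analysis"
begin

definition strictly_convex_on :: "'a::real_vector set \<Rightarrow> ('a \<Rightarrow> real) \<Rightarrow> bool" where
  "strictly_convex_on U G \<longleftrightarrow> convex U \<and>
     (\<forall>x\<in>U. \<forall>y\<in>U. \<forall>t::real. x \<noteq> y \<and> 0 < t \<and> t < 1 \<longrightarrow>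
        G ((1 - t) *\<^sub>R x + t *\<^sub>R y) < (1 - t) * G x + t * G y)"

definition legendre_type_1 :: "real set \<Rightarrow> (real \<Rightarrow> real) \<Rightarrow> bool" where
  "legendre_type_1 U g \<longleftrightarrow> U \<noteq> {} \<and> open U \<and> is_interval U \<and>
     (\<forall>x\<in>U. g differentiable (at x)) \<and>
     strictly_convex_on U g \<and>
     (\<forall>x0\<in>frontier U. filterlim (\<lambda>x. \<bar>deriv g x\<bar>) at_top (at x0 within U))"

text \<open>Bregman divergence D_G(x||y) = G x - G y - <grad G(y), x - y>, where the inner product
  with the gradient is the Frechet derivative of G at y applied to x - y.\<close>
definition bregman :: "('a::real_normed_vector \<Rightarrow> real) \<Rightarrow> 'a \<Rightarrow> 'a \<Rightarrow> real" where
  "bregman G x y = G x - G y - frechet_derivative G (at y) (x - y)"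

end

theory Submission
  imports Defs
begin

lemma sc_convex:
  fixes g :: "real \<Rightarrow> real"
  assumes "strictly_convex_on U g"
  shows "convex_on U g"
  unfolding convex_on_def
proof (intro conjI ballI allI impI)
  show "convex U" using assms unfolding strictly_convex_on_def by blast
next
  fix x y u v :: real assume xy: "x \<in> U" "y \<in> U" and uv: "0 \<le> u" "0 \<le> v" "u + v = 1"
  show "g (u *\<^sub>R x + v *\<^sub>R y) \<le> u * g x + v * g y"
  proof (cases "x = y \<or> u = 0 \<or> v = 0")
    case True
    then show ?thesis
    proof (elim disjE)
      assume "x = y" thus ?thesis using uv by (simp add: algebra_simps flip: distrib_right)
    next
      assume "u = 0" thus ?thesis using uv by simp
    next
      assume "v = 0" thus ?thesis using uv by simp
    qed
  next
    case False
    hence "g ((1 - v) *\<^sub>R x + v *\<^sub>R y) < (1 - v) * g x + v * g y"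
      using assms xy uv unfolding strictly_convex_on_def by auto
    moreover have "u = 1 - v" using uv by simp
    ultimately show ?thesis by simp
  qed
qed

lemma breg1_pos:
  fixes g :: "real \<Rightarrow> real"
  assumes leg: "legendre_type_1 U g" and a: "a \<in> U" and b: "b \<in> U" and ab: "a \<noteq> b"
  shows "g a - g b - deriv g b * (a - b) > 0"
proof -
  have sc: "strictly_convex_on U g" and op: "open U" and iv: "is_interval U"
    and dif: "\<And>x. x \<in> U \<Longrightarrow> g differentiable (at x)"
    using leg unfolding legendre_type_1_def by auto
  have cv: "convex_on U g" by (rule sc_convex[OF sc])
  have conn: "connected U" using iv is_interval_connected by blast
  have cvx: "convex U" using sc unfolding strictly_convex_on_def by blast
  have D: "(g has_field_derivative deriv g b) (at b within U)"
    using dif[OF b] by (simp add: DERIV_deriv_iff_real_differentiable has_field_derivative_at_within)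
  define m where "m = (a + b) / 2"
  have "(1/2::real) *\<^sub>R a + (1/2::real) *\<^sub>R b \<in> U" by (rule convexD[OF cvx a b]) auto
  hence mU: "m \<in> U" unfolding m_def by (simp add: field_simps)
  have "g m - g b \<ge> deriv g b * (m - b)"
    by (rule convex_on_imp_above_tangent[OF cv conn _ mU D]) (simp add: interior_open op b)
  moreover have "g ((1 - 1/2) *\<^sub>R b + (1/2) *\<^sub>R a) < (1 - 1/2) * g b + (1/2) * g a"
  proof -
    have H: "\<forall>x\<in>U. \<forall>y\<in>U. \<forall>t::real. x \<noteq> y \<and> 0 < t \<and> t < 1 \<longrightarrow>
        g ((1 - t) *\<^sub>R x + t *\<^sub>R y) < (1 - t) * g x + t * g y"
      using sc unfolding strictly_convex_on_def by blast
    have "b \<noteq> a \<and> 0 < (1/2::real) \<and> (1/2::real) < 1" using ab by simp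
    thus ?thesis using H b a by blast
  qed
  moreover have "(1 - 1/2) *\<^sub>R b + (1/2) *\<^sub>R a = m" unfolding m_def by simp
  ultimately show ?thesis unfolding m_def by (simp add: field_simps)
qed

lemma breg_sum:
  fixes f :: "'d::finite \<Rightarrow> real \<Rightarrow> real" and x y :: "real ^ 'd"
  assumes dif: "\<And>i. f i differentiable (at (y $ i))"
  shows "bregman (\<lambda>x :: real ^ 'd. \<Sum>i\<in>UNIV. f i (x $ i)) x y =
         (\<Sum>i\<in>UNIV. f i (x $ i) - f i (y $ i) - deriv (f i) (y $ i) * (x $ i - y $ i))"
proof -
  have Di: "((\<lambda>x :: real ^ 'd. f i (x $ i)) has_derivative (\<lambda>h. deriv (f i) (y $ i) * h $ i)) (at y)" for i
  proof -
    have "(f i has_derivative (*) (deriv (f i) (y $ i))) (at (y $ i))"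
      using dif[of i] by (intro has_field_derivative_imp_has_derivative)
        (simp add: DERIV_deriv_iff_real_differentiable)
    from diff_chain_at[OF bounded_linear.has_derivative[OF bounded_linear_vec_nth has_derivative_ident] this]
    show ?thesis by (simp add: o_def)
  qed
  have "((\<lambda>x :: real ^ 'd. \<Sum>i\<in>UNIV. f i (x $ i)) has_derivative
          (\<lambda>h. \<Sum>i\<in>UNIV. deriv (f i) (y $ i) * h $ i)) (at y)"
    by (rule has_derivative_sum) (rule Di)
  from frechet_derivative_at[OF this, symmetric]
  show ?thesis unfolding bregman_def by (simp add: sum_subtractf)
qed

theorem lemma5:
  fixes \<omega> :: "'d::finite \<Rightarrow> real set"
    and f :: "'d \<Rightarrow> real \<Rightarrow> real"
    and j :: 'd and c :: real and q :: "real ^ 'd"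
  assumes leg: "\<forall>i. legendre_type_1 (\<omega> i) (f i)"
    and nonempty: "{x :: real ^ 'd. x $ j = c} \<inter> {x. \<forall>i. x $ i \<in> \<omega> i} \<noteq> {}"
    and q: "q \<in> {x. \<forall>i. x $ i \<in> \<omega> i}"
  shows "let \<Omega> = {x :: real ^ 'd. \<forall>i. x $ i \<in> \<omega> i};
             F = (\<lambda>x :: real ^ 'd. \<Sum>i\<in>UNIV. f i (x $ i));
             P = {x :: real ^ 'd. x $ j = c};
             qP = (\<chi> i. if i = j then c else q $ i)
         in qP \<in> P \<inter> \<Omega> \<and>
            (\<forall>p\<in>P \<inter> \<Omega>. p \<noteq> qP \<longrightarrow> bregman F q qP < bregman F q p) \<and>
            (\<forall>p\<in>P \<inter> \<Omega>. p \<noteq> qP \<longrightarrow> bregman F qP q < bregman F p q)"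
proof -
  define F where "F = (\<lambda>x :: real ^ 'd. \<Sum>i\<in>UNIV. f i (x $ i))"
  define qP where "qP = (\<chi> i. if i = j then c else q $ i :: real ^ 'd)"
  define D where "D i a b = f i a - f i b - deriv (f i) b * (a - b)" for i a b
  have cj: "c \<in> \<omega> j" using nonempty by auto
  have qi: "q $ i \<in> \<omega> i" for i using q by auto
  have dif: "a \<in> \<omega> i \<Longrightarrow> f i differentiable (at a)" for i a
    using leg unfolding legendre_type_1_def by blast
  have Dpos: "a \<in> \<omega> i \<Longrightarrow> b \<in> \<omega> i \<Longrightarrow> a \<noteq> b \<Longrightarrow> D i a b > 0" for i a b
    unfolding D_def using breg1_pos leg by blast
  have D0: "D i a a = 0" for i a unfolding D_def by simp
  have Dge: "a \<in> \<omega> i \<Longrightarrow> b \<in> \<omega> i \<Longrightarrow> D i a b \<ge> 0" for i a b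
    using Dpos[of a i b] D0[of i a] by (cases "a = b") auto
  have qPin: "qP \<in> {x. x $ j = c} \<inter> {x. \<forall>i. x $ i \<in> \<omega> i}"
    unfolding qP_def using cj qi by auto
  hence qPO: "qP \<in> {x. \<forall>i. x $ i \<in> \<omega> i}" by blast
  have BR: "y \<in> {x. \<forall>i. x $ i \<in> \<omega> i} \<Longrightarrow> bregman F x y = (\<Sum>i\<in>UNIV. D i (x $ i) (y $ i))" for x y
    unfolding F_def D_def by (rule breg_sum) (auto intro: dif)
  have split: "(\<Sum>i\<in>UNIV. g i) = g j + (\<Sum>i\<in>UNIV - {j}. g i)" for g :: "'d \<Rightarrow> real"
    by (simp add: sum.remove)
  have key: "(\<Sum>i\<in>UNIV - {j}. h i) > 0"
    if "\<And>i. i \<noteq> j \<Longrightarrow> h i \<ge> 0" "k \<noteq> j" "h k > 0" for h :: "'d \<Rightarrow> real" and k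
  proof -
    have "(\<Sum>i\<in>UNIV - {j}. h i) \<ge> h k"
      by (rule member_le_sum) (use that in auto)
    thus ?thesis using that by simp
  qed
  have A: "bregman F q qP < bregman F q p" if p: "p \<in> {x. x $ j = c} \<inter> {x. \<forall>i. x $ i \<in> \<omega> i}" and ne: "p \<noteq> qP" for p
  proof -
    obtain k where k: "p $ k \<noteq> qP $ k" using ne by (metis vec_eq_iff)
    have kj: "k \<noteq> j" using k p unfolding qP_def by auto
    have pk: "p $ k \<noteq> q $ k" using k kj unfolding qP_def by simp
    have pi: "p $ i \<in> \<omega> i" for i using p by auto
    have "bregman F q qP = D j (q $ j) c"
      using BR[OF qPO] split unfolding qP_def by (simp add: D0)
    moreover have "bregman F q p = D j (q $ j) c + (\<Sum>i\<in>UNIV - {j}. D i (q $ i) (p $ i))"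
      using BR[of p q] p split by simp
    moreover have "(\<Sum>i\<in>UNIV - {j}. D i (q $ i) (p $ i)) > 0"
      by (rule key[of _ k]) (use Dge Dpos qi pi kj pk in auto)
    ultimately show ?thesis by simp
  qed
  have B: "bregman F qP q < bregman F p q" if p: "p \<in> {x. x $ j = c} \<inter> {x. \<forall>i. x $ i \<in> \<omega> i}" and ne: "p \<noteq> qP" for p
  proof -
    obtain k where k: "p $ k \<noteq> qP $ k" using ne by (metis vec_eq_iff)
    have kj: "k \<noteq> j" using k p unfolding qP_def by auto
    have pk: "p $ k \<noteq> q $ k" using k kj unfolding qP_def by simp
    have pi: "p $ i \<in> \<omega> i" for i using p by auto
    have "bregman F qP q = D j c (q $ j)"
      using BR[OF q] split unfolding qP_def by (simp add: D0)
    moreover have "bregman F p q = D j c (q $ j) + (\<Sum>i\<in>UNIV - {j}. D i (p $ i) (q $ i))"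
      using BR[OF q, of p] p split by simp
    moreover have "(\<Sum>i\<in>UNIV - {j}. D i (p $ i) (q $ i)) > 0"
      by (rule key[of _ k]) (use Dge Dpos qi pi kj pk in auto)
    ultimately show ?thesis by simp
  qed
  show ?thesis unfolding Let_def F_def[symmetric] qP_def[symmetric] using qPin A B by blast
qed

end
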